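(* Let $Z=(W,A,X,V,E,S)\sim\mathbb{P}$, where only $(W,A,X)$ is observed. Suppose that for all $j\in\{1,\dots,J\}$: (i) $\mathbb{E}[W_j\mid A,X]=\mathbb{E}[V_jE_jS\mid A,X]$; (ii) $V_j$, $E_j$ and $S$ are mutually independent conditionally on $(A,X)$; (iii) $E_j$ is independent of $(A,X)$; and (iv) $S$ is independent of $(A,X)$. Then for every $j$ the parameter $$\Psi^{(2)}_j(\mathbb{P}):=\log\left(\frac{\mathbb{E}\big[\mathbb{E}[V_j\mid A=1,X]\big]}{\mathbb{E}\big[\mathbb{E}[V_j\mid A=0,X]\big]}\right)$$ is identifiable, where the outer expectations are over the marginal distribution of $X$.
   Context: $W\in\mathbb{R}_{\ge 0}^J$ are observed category levels, $A\in\{0,1\}$ a binary exposure, $X\in\mathcal{X}\subseteq\mathbb{R}^p$ covariates, $V\in\mathbb{R}_{\ge0}^J$ latent true category levels, $E\in\mathbb{R}_{>0}^J$ latent category-specific observabilities, $S\in\mathbb{R}_{>0}$ a latent sample-specific scale; data are i.i.d. from $\mathbb{P}$. The parameter is assumed well defined (numerator and denominator positive and finite). A parameter is identifiable if its value is uniquely determined by the distribution of the observed variables $(W,A,X)$ among distributions satisfying the assumptions. *)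

theory Defs
  imports "HOL-Probability.Probability"
begin

text \<open>The full (partly latent) data vector Z = (W, A, X, V, E, S) lives in the space
  (real^'J) (W) \<times> real (A, coded 0/1) \<times> (real^'p) (X) \<times> (real^'J) (V) \<times> (real^'J) (E) \<times> real (S),
  equipped with its Borel sigma-algebra.\<close>

definition zW :: "((real^'J) \<times> real \<times> (real^'p) \<times> (real^'J) \<times> (real^'J) \<times> real) \<Rightarrow> (real^'J)"
  where "zW z = fst z"
definition zA :: "((real^'J) \<times> real \<times> (real^'p) \<times> (real^'J) \<times> (real^'J) \<times> real) \<Rightarrow> real"
  where "zA z = fst (snd z)"
definition zX :: "((real^'J) \<times> real \<times> (real^'p) \<times> (real^'J) \<times> (real^'J) \<times> real) \<Rightarrow> (real^'p)"
  where "zX z = fst (snd (snd z))"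
definition zV :: "((real^'J) \<times> real \<times> (real^'p) \<times> (real^'J) \<times> (real^'J) \<times> real) \<Rightarrow> (real^'J)"
  where "zV z = fst (snd (snd (snd z)))"
definition zE :: "((real^'J) \<times> real \<times> (real^'p) \<times> (real^'J) \<times> (real^'J) \<times> real) \<Rightarrow> (real^'J)"
  where "zE z = fst (snd (snd (snd (snd z))))"
definition zS :: "((real^'J) \<times> real \<times> (real^'p) \<times> (real^'J) \<times> (real^'J) \<times> real) \<Rightarrow> real"
  where "zS z = snd (snd (snd (snd (snd z))))"

definition zObs :: "((real^'J) \<times> real \<times> (real^'p) \<times> (real^'J) \<times> (real^'J) \<times> real) \<Rightarrow> (real^'J) \<times> real \<times> (real^'p)"
  where "zObs z = (zW z, zA z, zX z)"

definition sigAX :: "((real^'J) \<times> real \<times> (real^'p) \<times> (real^'J) \<times> (real^'J) \<times> real) measure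
   \<Rightarrow> ((real^'J) \<times> real \<times> (real^'p) \<times> (real^'J) \<times> (real^'J) \<times> real) measure"
  where "sigAX P = vimage_algebra (space P) (\<lambda>z. (zA z, zX z)) borel"
definition sigX :: "((real^'J) \<times> real \<times> (real^'p) \<times> (real^'J) \<times> (real^'J) \<times> real) measure
   \<Rightarrow> ((real^'J) \<times> real \<times> (real^'p) \<times> (real^'J) \<times> (real^'J) \<times> real) measure"
  where "sigX P = vimage_algebra (space P) zX borel"

definition cond_indep3 :: "'a measure \<Rightarrow> 'a measure \<Rightarrow> ('a \<Rightarrow> real) \<Rightarrow> ('a \<Rightarrow> real) \<Rightarrow> ('a \<Rightarrow> real) \<Rightarrow> bool"
  where "cond_indep3 M F U1 U2 U3 \<longleftrightarrow>
    (\<forall>B1\<in>sets borel. \<forall>B2\<in>sets borel. \<forall>B3\<in>sets borel.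
      AE \<omega> in M. real_cond_exp M F (\<lambda>\<omega>. indicator B1 (U1 \<omega>) * indicator B2 (U2 \<omega>) * indicator B3 (U3 \<omega>)) \<omega>
        = real_cond_exp M F (\<lambda>\<omega>. indicator B1 (U1 \<omega>)) \<omega>
          * real_cond_exp M F (\<lambda>\<omega>. indicator B2 (U2 \<omega>)) \<omega>
          * real_cond_exp M F (\<lambda>\<omega>. indicator B3 (U3 \<omega>)) \<omega>)"

definition indep_rv :: "'a measure \<Rightarrow> ('a \<Rightarrow> 'b::topological_space) \<Rightarrow> ('a \<Rightarrow> 'c::topological_space) \<Rightarrow> bool"
  where "indep_rv M U Y \<longleftrightarrow>
    U \<in> borel_measurable M \<and> Y \<in> borel_measurable M \<and>
    prob_space.indep_set M {U -` B \<inter> space M | B. B \<in> sets borel} {Y -` B \<inter> space M | B. B \<in> sets borel}"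

text \<open>The regression E[V_j | A = a, X], as a function of the sample point (through X):
  E[V_j 1{A=a} | X] / P(A = a | X).\<close>
definition regV :: "((real^'J) \<times> real \<times> (real^'p) \<times> (real^'J) \<times> (real^'J) \<times> real) measure
   \<Rightarrow> 'J \<Rightarrow> real \<Rightarrow> ((real^'J) \<times> real \<times> (real^'p) \<times> (real^'J) \<times> (real^'J) \<times> real) \<Rightarrow> real"
  where "regV P j a z =
    real_cond_exp P (sigX P) (\<lambda>z. zV z $ j * indicator {z. zA z = a} z) z
    / real_cond_exp P (sigX P) (indicator {z. zA z = a}) z"

definition Psi2 :: "((real^'J) \<times> real \<times> (real^'p) \<times> (real^'J) \<times> (real^'J) \<times> real) measure \<Rightarrow> 'J \<Rightarrow> real"
  where "Psi2 P j = ln ((\<integral>z. regV P j 1 z \<partial>P) / (\<integral>z. regV P j 0 z \<partial>P))"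

definition Psi2_well_defined :: "((real^'J) \<times> real \<times> (real^'p) \<times> (real^'J) \<times> (real^'J) \<times> real) measure \<Rightarrow> 'J \<Rightarrow> bool"
  where "Psi2_well_defined P j \<longleftrightarrow>
    (\<forall>a\<in>{0,1}. integrable P (regV P j a) \<and> 0 < (\<integral>z. regV P j a z \<partial>P))"

text \<open>Integrability of W_j, V_j and V_j E_j S is assumed so
  that the conditional expectations in (i) are meaningful.\<close>
definition model :: "((real^'J) \<times> real \<times> (real^'p) \<times> (real^'J) \<times> (real^'J) \<times> real) measure \<Rightarrow> bool"
  where "model P \<longleftrightarrow>
    prob_space P \<and> sets P = sets borel \<and>
    (AE z in P. zA z \<in> {0, 1} \<and> 0 < zS z \<and>
       (\<forall>j. 0 \<le> zW z $ j \<and> 0 \<le> zV z $ j \<and> 0 < zE z $ j)) \<and>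
    (\<forall>j. integrable P (\<lambda>z. zW z $ j) \<and> integrable P (\<lambda>z. zV z $ j) \<and>
         integrable P (\<lambda>z. zV z $ j * zE z $ j * zS z) \<and>
      \<comment> \<open>(i)\<close>
      (AE z in P. real_cond_exp P (sigAX P) (\<lambda>z. zW z $ j) z
                 = real_cond_exp P (sigAX P) (\<lambda>z. zV z $ j * zE z $ j * zS z) z) \<and>
      \<comment> \<open>(ii)\<close>
      cond_indep3 P (sigAX P) (\<lambda>z. zV z $ j) (\<lambda>z. zE z $ j) zS \<and>
      \<comment> \<open>(iii)\<close>
      indep_rv P (\<lambda>z. zE z $ j) (\<lambda>z. (zA z, zX z))) \<and>
    \<comment> \<open>(iv)\<close>
    indep_rv P zS (\<lambda>z. (zA z, zX z))"

end

theory Submission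
  imports Defs
begin

type_synonym ('J,'p) zt = "(real^'J) \<times> real \<times> (real^'p) \<times> (real^'J) \<times> (real^'J) \<times> real"

lemma meas_borel:
  shows "(\<lambda>z. zW z $ j) \<in> borel_measurable (borel :: ('J::finite,'p::finite) zt measure)"
    "(\<lambda>z. zV z $ j) \<in> borel_measurable (borel :: ('J::finite,'p::finite) zt measure)"
    "(\<lambda>z. zE z $ j) \<in> borel_measurable (borel :: ('J::finite,'p::finite) zt measure)"
    "zS \<in> borel_measurable (borel :: ('J::finite,'p::finite) zt measure)"
    "zA \<in> borel_measurable (borel :: ('J::finite,'p::finite) zt measure)"
    "zX \<in> borel_measurable (borel :: ('J::finite,'p::finite) zt measure)"
    "(\<lambda>z. (zA z, zX z)) \<in> borel_measurable (borel :: ('J::finite,'p::finite) zt measure)"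
    "zObs \<in> borel_measurable (borel :: ('J::finite,'p::finite) zt measure)"
  unfolding zObs_def zW_def zA_def zX_def zV_def zE_def zS_def
  by (intro borel_measurable_continuous_onI continuous_intros)+

lemma meas_P:
  assumes "sets P = sets (borel :: ('J::finite,'p::finite) zt measure)"
  shows "(\<lambda>z. zW z $ j) \<in> borel_measurable P"
    "(\<lambda>z. zV z $ j) \<in> borel_measurable P"
    "(\<lambda>z. zE z $ j) \<in> borel_measurable P"
    "zS \<in> borel_measurable P"
    "zA \<in> borel_measurable P"
    "zX \<in> borel_measurable P"
    "(\<lambda>z. (zA z, zX z)) \<in> borel_measurable P"
    "zObs \<in> measurable P borel"
  by (simp_all only: measurable_cong_sets[OF assms refl] meas_borel)

lemma subalg_AX:
  assumes "prob_space P" "sets P = sets (borel :: ('J::finite,'p::finite) zt measure)"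
  shows "sigma_finite_subalgebra P (sigAX P)"
proof -
  interpret prob_space P by fact
  have "subalgebra P (sigAX P)" unfolding subalgebra_def sigAX_def
    using measurable_iff_sets[THEN iffD1, OF meas_P(7)[OF assms(2)]] by auto
  then show ?thesis
    by (intro finite_measure_subalgebra_is_sigma_finite) (unfold_locales)
qed

lemma subalg_X:
  assumes "prob_space P" "sets P = sets (borel :: ('J::finite,'p::finite) zt measure)"
  shows "sigma_finite_subalgebra P (sigX P)"
proof -
  interpret prob_space P by fact
  have "subalgebra P (sigX P)" unfolding subalgebra_def sigX_def
    using measurable_iff_sets[THEN iffD1, OF meas_P(6)[OF assms(2)]] by auto
  then show ?thesis
    by (intro finite_measure_subalgebra_is_sigma_finite) (unfold_locales)
qed

lemma sets_sigAX:
  "sets (sigAX P) = {(\<lambda>z. (zA z, zX z)) -` C \<inter> space P | C. C \<in> sets borel}"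
  unfolding sigAX_def by (rule sets_vimage_algebra2) auto

lemma sets_sigX:
  "sets (sigX P) = {zX -` C \<inter> space P | C. C \<in> sets borel}"
  unfolding sigX_def by (rule sets_vimage_algebra2) auto

lemma indep_const:
  fixes P :: "('J::finite,'p::finite) zt measure" and U :: "('J,'p) zt \<Rightarrow> real"
  assumes "prob_space P" "sets P = sets borel" "indep_rv P U (\<lambda>z. (zA z, zX z))"
    and B: "B \<in> sets borel"
  shows "AE z in P. real_cond_exp P (sigAX P) (\<lambda>z. indicator B (U z)) z = measure P (U -` B \<inter> space P)"
proof -
  interpret prob_space P by fact
  interpret sigma_finite_subalgebra P "sigAX P" using subalg_AX assms by blast
  have Um[measurable]: "U \<in> borel_measurable P" using assms(3) unfolding indep_rv_def by auto
  have ind: "indep_set {U -` B \<inter> space P | B. B \<in> sets borel} {(\<lambda>z. (zA z, zX z)) -` B \<inter> space P | B. B \<in> sets borel}"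
    using assms(3) unfolding indep_rv_def by auto
  show ?thesis
  proof (rule real_cond_exp_charact)
    fix A assume A: "A \<in> sets (sigAX P)"
    then have Ai: "A \<in> {(\<lambda>z. (zA z, zX z)) -` B \<inter> space P | B. B \<in> sets borel}" using sets_sigAX by blast
    have AP[measurable]: "A \<in> sets P" using A subalg unfolding subalgebra_def by auto
    have UB[measurable]: "U -` B \<inter> space P \<in> sets P" using B by measurable
    have "(\<integral>x\<in>A. indicator B (U x) \<partial>P) = (\<integral>x. indicator (A \<inter> (U -` B \<inter> space P)) x \<partial>P)"
      unfolding set_lebesgue_integral_def
      by (rule Bochner_Integration.integral_cong) (auto simp: indicator_def)
    also have "\<dots> = prob (A \<inter> (U -` B \<inter> space P))" by simp
    also have "\<dots> = prob A * prob (U -` B \<inter> space P)"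
      using indep_setD[OF ind, of "U -` B \<inter> space P" A] B Ai by (auto simp: Int_commute mult.commute)
    also have "\<dots> = (\<integral>x\<in>A. measure P (U -` B \<inter> space P) \<partial>P)"
      unfolding set_lebesgue_integral_def by simp
    finally show "(\<integral>x\<in>A. indicator B (U x) \<partial>P) = (\<integral>x\<in>A. measure P (U -` B \<inter> space P) \<partial>P)" .
  qed (auto intro!: integrable_const_bound[where B=1] measurable_compose[OF Um borel_measurable_indicator[OF B]])
qed


lemma extend_ind:
  fixes k k' :: "'a \<Rightarrow> ennreal" and Y Y' :: "'a \<Rightarrow> real" and c :: ennreal
  assumes [measurable]: "k \<in> borel_measurable M" "k' \<in> borel_measurable M"
    "Y \<in> borel_measurable M" "Y' \<in> borel_measurable M"
  and base: "\<And>B. B \<in> sets borel \<Longrightarrow> (\<integral>\<^sup>+ z. k z * indicator B (Y z) \<partial>M) = c * (\<integral>\<^sup>+ z. k' z * indicator B (Y' z) \<partial>M)"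
  and h: "h \<in> borel_measurable borel"
  shows "(\<integral>\<^sup>+ z. k z * h (Y z) \<partial>M) = c * (\<integral>\<^sup>+ z. k' z * h (Y' z) \<partial>M)"
  using h
proof (induction rule: borel_measurable_induct)
  case (cong f g)
  then have "f = g" by auto
  then show ?case using cong by simp
next
  case (set A)
  then show ?case using base by simp
next
  case (mult u c')
  note [measurable] = mult(2)
  have "(\<integral>\<^sup>+ z. k z * (c' * u (Y z)) \<partial>M) = (\<integral>\<^sup>+ z. c' * (k z * u (Y z)) \<partial>M)"
    by (simp add: ac_simps)
  also have "\<dots> = c' * (\<integral>\<^sup>+ z. k z * u (Y z) \<partial>M)" by (rule nn_integral_cmult) measurable
  also have "\<dots> = c * (c' * (\<integral>\<^sup>+ z. k' z * u (Y' z) \<partial>M))" using mult(4) by (simp add: ac_simps)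
  also have "c' * (\<integral>\<^sup>+ z. k' z * u (Y' z) \<partial>M) = (\<integral>\<^sup>+ z. c' * (k' z * u (Y' z)) \<partial>M)"
    by (rule nn_integral_cmult[symmetric]) measurable
  also have "\<dots> = (\<integral>\<^sup>+ z. k' z * (c' * u (Y' z)) \<partial>M)" by (simp add: ac_simps)
  finally show ?case .
next
  case (add u v)
  have [measurable]: "u \<in> borel_measurable borel" "v \<in> borel_measurable borel" using add by auto
  have "(\<integral>\<^sup>+ z. k z * (v (Y z) + u (Y z)) \<partial>M) = (\<integral>\<^sup>+ z. k z * v (Y z) + k z * u (Y z) \<partial>M)"
    by (simp add: distrib_left)
  also have "\<dots> = (\<integral>\<^sup>+ z. k z * v (Y z) \<partial>M) + (\<integral>\<^sup>+ z. k z * u (Y z) \<partial>M)"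
    by (rule nn_integral_add) measurable
  also have "\<dots> = c * ((\<integral>\<^sup>+ z. k' z * v (Y' z) \<partial>M) + (\<integral>\<^sup>+ z. k' z * u (Y' z) \<partial>M))"
    using add by (simp add: distrib_left)
  also have "(\<integral>\<^sup>+ z. k' z * v (Y' z) \<partial>M) + (\<integral>\<^sup>+ z. k' z * u (Y' z) \<partial>M) = (\<integral>\<^sup>+ z. k' z * v (Y' z) + k' z * u (Y' z) \<partial>M)"
    by (rule nn_integral_add[symmetric]) measurable
  also have "\<dots> = (\<integral>\<^sup>+ z. k' z * (v (Y' z) + u (Y' z)) \<partial>M)" by (simp add: distrib_left)
  finally show ?case .
next
  case (seq U)
  note [measurable] = seq(1)
  have inc: "incseq (\<lambda>i z. kk z * U i (YY z))" for kk :: "'a \<Rightarrow> ennreal" and YY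
    using \<open>incseq U\<close> by (auto simp: incseq_def le_fun_def intro!: mult_left_mono)
  have "(\<integral>\<^sup>+ z. k z * (SUP i. U i) (Y z) \<partial>M) = (\<integral>\<^sup>+ z. (SUP i. k z * U i (Y z)) \<partial>M)"
    by (simp only: SUP_apply SUP_mult_left_ennreal)
  also have "\<dots> = (SUP i. (\<integral>\<^sup>+ z. k z * U i (Y z) \<partial>M))"
    by (rule nn_integral_monotone_convergence_SUP[OF inc]) measurable
  also have "\<dots> = (SUP i. c * (\<integral>\<^sup>+ z. k' z * U i (Y' z) \<partial>M))" using seq by simp
  also have "\<dots> = c * (SUP i. (\<integral>\<^sup>+ z. k' z * U i (Y' z) \<partial>M))" by (simp add: SUP_mult_left_ennreal)
  also have "(SUP i. (\<integral>\<^sup>+ z. k' z * U i (Y' z) \<partial>M)) = (\<integral>\<^sup>+ z. (SUP i. k' z * U i (Y' z)) \<partial>M)"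
    by (rule nn_integral_monotone_convergence_SUP[OF inc, symmetric]) measurable
  also have "\<dots> = (\<integral>\<^sup>+ z. k' z * (SUP i. U i) (Y' z) \<partial>M)"
    by (simp only: SUP_apply SUP_mult_left_ennreal)
  finally show ?case .
qed


lemma prod_ind:
  fixes P :: "('J::finite,'p::finite) zt measure" and V E S :: "('J,'p) zt \<Rightarrow> real"
  assumes "prob_space P" "sets P = sets borel"
    and [measurable]: "V \<in> borel_measurable P" "E \<in> borel_measurable P" "S \<in> borel_measurable P"
    and ci: "cond_indep3 P (sigAX P) V E S"
    and iE: "indep_rv P E (\<lambda>z. (zA z, zX z))" and iS: "indep_rv P S (\<lambda>z. (zA z, zX z))"
    and A: "A \<in> sets (sigAX P)" and [measurable]: "B1 \<in> sets borel" "B2 \<in> sets borel" "B3 \<in> sets borel"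
  shows "(\<integral>\<^sup>+ z. indicator A z * indicator B1 (V z) * indicator B2 (E z) * indicator B3 (S z) \<partial>P)
    = (\<integral>\<^sup>+ z. indicator A z * indicator B1 (V z) \<partial>P) * emeasure P (E -` B2 \<inter> space P) * emeasure P (S -` B3 \<inter> space P)"
proof -
  interpret prob_space P by fact
  interpret sigma_finite_subalgebra P "sigAX P" using subalg_AX assms by blast
  have AF[measurable]: "A \<in> sets (sigAX P)" by fact
  have AP[measurable]: "A \<in> sets P" using A subalg unfolding subalgebra_def by auto
  define p2 where "p2 = prob (E -` B2 \<inter> space P)"
  define p3 where "p3 = prob (S -` B3 \<inter> space P)"
  have intbd: "integrable P (\<lambda>z. indicator A z * g z)" if [measurable]: "g \<in> borel_measurable P" and "\<And>z. \<bar>g z\<bar> \<le> 1" for g :: "_ \<Rightarrow> real"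
    apply (rule integrable_const_bound[where B=1])
    using that by (auto simp: indicator_def)
  have i1: "integrable P (\<lambda>z. (indicator A z :: real) * (indicator B1 (V z) * indicator B2 (E z) * indicator B3 (S z)))"
    by (rule integrable_const_bound[where B=1]) (auto simp: indicator_def)
  have i2: "integrable P (\<lambda>z. (indicator A z :: real) * indicator B1 (V z))"
    by (rule integrable_const_bound[where B=1]) (auto simp: indicator_def)
  have c1: "AE z in P. real_cond_exp P (sigAX P) (\<lambda>z. indicator B1 (V z) * indicator B2 (E z) * indicator B3 (S z)) z
        = real_cond_exp P (sigAX P) (\<lambda>z. indicator B1 (V z)) z
          * real_cond_exp P (sigAX P) (\<lambda>z. indicator B2 (E z)) z
          * real_cond_exp P (sigAX P) (\<lambda>z. indicator B3 (S z)) z"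
    using ci unfolding cond_indep3_def by auto
  have c2: "AE z in P. real_cond_exp P (sigAX P) (\<lambda>z. indicator B2 (E z)) z = p2"
    unfolding p2_def by (rule indep_const[OF assms(1,2) iE]) simp
  have c3: "AE z in P. real_cond_exp P (sigAX P) (\<lambda>z. indicator B3 (S z)) z = p3"
    unfolding p3_def by (rule indep_const[OF assms(1,2) iS]) simp
  have "(\<integral> z. indicator A z * (indicator B1 (V z) * indicator B2 (E z) * indicator B3 (S z)) \<partial>P)
      = (\<integral> z. indicator A z * real_cond_exp P (sigAX P) (\<lambda>z. indicator B1 (V z) * indicator B2 (E z) * indicator B3 (S z)) z \<partial>P)"
    by (rule real_cond_exp_intg(2)[OF i1, symmetric]) measurable
  also have "\<dots> = (\<integral> z. p2 * p3 * (indicator A z * real_cond_exp P (sigAX P) (\<lambda>z. indicator B1 (V z)) z) \<partial>P)"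
    by (rule integral_cong_AE) (use c1 c2 c3 in \<open>auto\<close>)
  also have "\<dots> = p2 * p3 * (\<integral> z. indicator A z * real_cond_exp P (sigAX P) (\<lambda>z. indicator B1 (V z)) z \<partial>P)"
    by simp
  also have "(\<integral> z. indicator A z * real_cond_exp P (sigAX P) (\<lambda>z. indicator B1 (V z)) z \<partial>P)
      = (\<integral> z. indicator A z * indicator B1 (V z) \<partial>P)"
    by (rule real_cond_exp_intg(2)[OF i2]) measurable
  finally have r: "(\<integral> z. indicator A z * (indicator B1 (V z) * indicator B2 (E z) * indicator B3 (S z)) \<partial>P)
      = p2 * p3 * (\<integral> z. indicator A z * indicator B1 (V z) \<partial>P)" .
  have e1: "(\<integral>\<^sup>+ z. indicator A z * indicator B1 (V z) * indicator B2 (E z) * indicator B3 (S z) \<partial>P)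
      = (\<integral>\<^sup>+ z. ennreal (indicator A z * (indicator B1 (V z) * indicator B2 (E z) * indicator B3 (S z))) \<partial>P)"
    by (rule nn_integral_cong) (simp split: split_indicator)
  also have "\<dots> = ennreal (\<integral> z. indicator A z * (indicator B1 (V z) * indicator B2 (E z) * indicator B3 (S z)) \<partial>P)"
    by (rule nn_integral_eq_integral[OF i1]) auto
  finally have e1': "(\<integral>\<^sup>+ z. indicator A z * indicator B1 (V z) * indicator B2 (E z) * indicator B3 (S z) \<partial>P) = ennreal (p2 * p3 * (\<integral> z. indicator A z * indicator B1 (V z) \<partial>P))"
    using r by simp
  have e2: "(\<integral>\<^sup>+ z. indicator A z * indicator B1 (V z) \<partial>P)
      = (\<integral>\<^sup>+ z. ennreal (indicator A z * indicator B1 (V z)) \<partial>P)"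
    by (rule nn_integral_cong) (simp split: split_indicator)
  also have "\<dots> = ennreal (\<integral> z. indicator A z * indicator B1 (V z) \<partial>P)"
    by (rule nn_integral_eq_integral[OF i2]) auto
  finally have e2': "(\<integral>\<^sup>+ z. indicator A z * indicator B1 (V z) \<partial>P) = ennreal (\<integral> z. indicator A z * indicator B1 (V z) \<partial>P)" .
  have nn: "0 \<le> (\<integral> z. (indicator A z :: real) * indicator B1 (V z) \<partial>P)" by (rule Bochner_Integration.integral_nonneg) simp
  show ?thesis unfolding e1' e2'
    by (simp add: emeasure_eq_measure p2_def p3_def ennreal_mult'' nn mult_ac)
qed


lemma nn_ind_comp:
  assumes [measurable]: "Y \<in> borel_measurable M" "B \<in> sets borel"
  shows "(\<integral>\<^sup>+ z. indicator B (Y z) \<partial>M) = emeasure M (Y -` B \<inter> space M)"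
proof -
  have "(\<integral>\<^sup>+ z. indicator B (Y z) \<partial>M) = (\<integral>\<^sup>+ z. indicator (Y -` B \<inter> space M) z \<partial>M)"
    by (rule nn_integral_cong) (auto simp: indicator_def)
  also have "\<dots> = emeasure M (Y -` B \<inter> space M)" by (rule nn_integral_indicator) measurable
  finally show ?thesis .
qed

lemma prod_nn:
  fixes P :: "('J::finite,'p::finite) zt measure" and V E S :: "('J,'p) zt \<Rightarrow> real"
    and f g h :: "real \<Rightarrow> ennreal"
  assumes "prob_space P" "sets P = sets borel"
    and [measurable]: "V \<in> borel_measurable P" "E \<in> borel_measurable P" "S \<in> borel_measurable P"
    and ci: "cond_indep3 P (sigAX P) V E S"
    and iE: "indep_rv P E (\<lambda>z. (zA z, zX z))" and iS: "indep_rv P S (\<lambda>z. (zA z, zX z))"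
    and A: "A \<in> sets (sigAX P)"
    and [measurable]: "f \<in> borel_measurable borel" "g \<in> borel_measurable borel" "h \<in> borel_measurable borel"
  shows "(\<integral>\<^sup>+ z. indicator A z * f (V z) * g (E z) * h (S z) \<partial>P)
    = (\<integral>\<^sup>+ z. indicator A z * f (V z) \<partial>P) * (\<integral>\<^sup>+ z. g (E z) \<partial>P) * (\<integral>\<^sup>+ z. h (S z) \<partial>P)"
proof -
  interpret prob_space P by fact
  interpret sigma_finite_subalgebra P "sigAX P" using subalg_AX assms by blast
  have AP[measurable]: "A \<in> sets P" using A subalg unfolding subalgebra_def by auto
  have stepA: "(\<integral>\<^sup>+ z. indicator A z * indicator B1 (V z) * indicator B2 (E z) * hh (S z) \<partial>P)
    = (\<integral>\<^sup>+ z. indicator A z * indicator B1 (V z) \<partial>P) * (\<integral>\<^sup>+ z. indicator B2 (E z) \<partial>P) * (\<integral>\<^sup>+ z. hh (S z) \<partial>P)"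
    if [measurable]: "B1 \<in> sets borel" "B2 \<in> sets borel" "hh \<in> borel_measurable borel" for B1 B2 and hh :: "real \<Rightarrow> ennreal"
  proof -
    have "(\<integral>\<^sup>+ z. (indicator A z * indicator B1 (V z) * indicator B2 (E z)) * hh (S z) \<partial>P)
      = ((\<integral>\<^sup>+ z. indicator A z * indicator B1 (V z) \<partial>P) * (\<integral>\<^sup>+ z. indicator B2 (E z) \<partial>P)) * (\<integral>\<^sup>+ z. (\<lambda>_. 1) z * hh (S z) \<partial>P)"
    proof (rule extend_ind)
      fix B3 :: "real set" assume [measurable]: "B3 \<in> sets borel"
      show "(\<integral>\<^sup>+ z. (indicator A z * indicator B1 (V z) * indicator B2 (E z)) * indicator B3 (S z) \<partial>P)
      = ((\<integral>\<^sup>+ z. indicator A z * indicator B1 (V z) \<partial>P) * (\<integral>\<^sup>+ z. indicator B2 (E z) \<partial>P)) * (\<integral>\<^sup>+ z. (\<lambda>_. 1) z * indicator B3 (S z) \<partial>P)"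
        using prod_ind[OF assms(1-8) A that(1,2) \<open>B3 \<in> sets borel\<close>]
        by (simp add: nn_ind_comp)
    qed measurable
    then show ?thesis by simp
  qed
  have stepB: "(\<integral>\<^sup>+ z. indicator A z * indicator B1 (V z) * gg (E z) * hh (S z) \<partial>P)
    = (\<integral>\<^sup>+ z. indicator A z * indicator B1 (V z) \<partial>P) * (\<integral>\<^sup>+ z. gg (E z) \<partial>P) * (\<integral>\<^sup>+ z. hh (S z) \<partial>P)"
    if [measurable]: "B1 \<in> sets borel" "gg \<in> borel_measurable borel" "hh \<in> borel_measurable borel" for B1 and gg hh :: "real \<Rightarrow> ennreal"
  proof -
    have "(\<integral>\<^sup>+ z. (indicator A z * indicator B1 (V z) * hh (S z)) * gg (E z) \<partial>P)
      = ((\<integral>\<^sup>+ z. indicator A z * indicator B1 (V z) \<partial>P) * (\<integral>\<^sup>+ z. hh (S z) \<partial>P)) * (\<integral>\<^sup>+ z. (\<lambda>_. 1) z * gg (E z) \<partial>P)"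
    proof (rule extend_ind)
      fix B2 :: "real set" assume [measurable]: "B2 \<in> sets borel"
      show "(\<integral>\<^sup>+ z. (indicator A z * indicator B1 (V z) * hh (S z)) * indicator B2 (E z) \<partial>P)
      = ((\<integral>\<^sup>+ z. indicator A z * indicator B1 (V z) \<partial>P) * (\<integral>\<^sup>+ z. hh (S z) \<partial>P)) * (\<integral>\<^sup>+ z. (\<lambda>_. 1) z * indicator B2 (E z) \<partial>P)"
        using stepA[OF that(1) \<open>B2 \<in> sets borel\<close> that(3)]
        by (simp add: ac_simps)
    qed measurable
    then show ?thesis by (simp add: ac_simps)
  qed
  have "(\<integral>\<^sup>+ z. (indicator A z * g (E z) * h (S z)) * f (V z) \<partial>P)
      = ((\<integral>\<^sup>+ z. g (E z) \<partial>P) * (\<integral>\<^sup>+ z. h (S z) \<partial>P)) * (\<integral>\<^sup>+ z. indicator A z * f (V z) \<partial>P)"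
  proof (rule extend_ind)
    fix B1 :: "real set" assume [measurable]: "B1 \<in> sets borel"
    show "(\<integral>\<^sup>+ z. (indicator A z * g (E z) * h (S z)) * indicator B1 (V z) \<partial>P)
      = ((\<integral>\<^sup>+ z. g (E z) \<partial>P) * (\<integral>\<^sup>+ z. h (S z) \<partial>P)) * (\<integral>\<^sup>+ z. indicator A z * indicator B1 (V z) \<partial>P)"
      using stepB[OF \<open>B1 \<in> sets borel\<close>, of g h]
      by (simp add: ac_simps)
  qed measurable
  then show ?thesis by (simp add: ac_simps)
qed


lemma key:
  fixes P :: "('J::finite,'p::finite) zt measure" and j :: 'J
  assumes "model P"
  obtains d where "\<And>A. A \<in> sets (sigAX P) \<Longrightarrow>
     (\<integral>z. indicator A z * zV z $ j \<partial>P) = d * (\<integral>z. indicator A z * zW z $ j \<partial>P)"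
proof -
  define V :: "('J,'p) zt \<Rightarrow> real" where "V = (\<lambda>z. zV z $ j)"
  define E :: "('J,'p) zt \<Rightarrow> real" where "E = (\<lambda>z. zE z $ j)"
  define W :: "('J,'p) zt \<Rightarrow> real" where "W = (\<lambda>z. zW z $ j)"
  have pP: "prob_space P" and sP: "sets P = sets borel"
    and ae: "AE z in P. 0 < zS z \<and> 0 \<le> W z \<and> 0 \<le> V z \<and> 0 < E z"
    and iW: "integrable P W" and iV: "integrable P V" and iVES: "integrable P (\<lambda>z. V z * E z * zS z)"
    and c_i: "AE z in P. real_cond_exp P (sigAX P) W z = real_cond_exp P (sigAX P) (\<lambda>z. V z * E z * zS z) z"
    and ci: "cond_indep3 P (sigAX P) V E zS"
    and iE: "indep_rv P E (\<lambda>z. (zA z, zX z))" and iS: "indep_rv P zS (\<lambda>z. (zA z, zX z))"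
    using assms unfolding model_def V_def E_def W_def by (auto elim: AE_mp)
  interpret prob_space P by fact
  interpret sigma_finite_subalgebra P "sigAX P" using subalg_AX pP sP by blast
  have [measurable]: "V \<in> borel_measurable P" "E \<in> borel_measurable P" "W \<in> borel_measurable P" "zS \<in> borel_measurable P"
    using meas_P[OF sP] unfolding V_def E_def W_def by auto
  have spU: "space P = UNIV" using sets_eq_imp_space_eq[OF sP] by simp
  define cE where "cE = (\<integral>\<^sup>+ z. ennreal (E z) \<partial>P)"
  define cS where "cS = (\<integral>\<^sup>+ z. ennreal (zS z) \<partial>P)"
  define c where "c = cE * cS"
  have N: "(\<integral>\<^sup>+ z. indicator A z * ennreal (V z) * ennreal (E z) * ennreal (zS z) \<partial>P)
      = (\<integral>\<^sup>+ z. indicator A z * ennreal (V z) \<partial>P) * c" if "A \<in> sets (sigAX P)" for A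
    using prod_nn[OF pP sP _ _ _ ci iE iS that, of ennreal ennreal ennreal]
    unfolding c_def cE_def cS_def by (simp add: mult_ac)
  have cE0: "cE \<noteq> 0"
  proof
    assume "cE = 0"
    then have "AE z in P. ennreal (E z) = 0" unfolding cE_def by (subst (asm) nn_integral_0_iff_AE) auto
    with ae have "AE z in P. False" by eventually_elim auto
    then show False by simp
  qed
  have cS0: "cS \<noteq> 0"
  proof
    assume "cS = 0"
    then have "AE z in P. ennreal (zS z) = 0" unfolding cS_def by (subst (asm) nn_integral_0_iff_AE) auto
    with ae have "AE z in P. False" by eventually_elim auto
    then show False by simp
  qed
  have c0: "c \<noteq> 0" unfolding c_def using cE0 cS0 by simp
  have AP: "A \<in> sets P" if "A \<in> sets (sigAX P)" for A using that subalg unfolding subalgebra_def by auto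
  have WV: "(\<integral>z. indicator A z * W z \<partial>P) = (\<integral>z. indicator A z * (V z * E z * zS z) \<partial>P)"
    if A: "A \<in> sets (sigAX P)" for A
  proof -
    have [measurable]: "A \<in> sets (sigAX P)" "A \<in> sets P" using A AP by auto
    have "(\<integral>z. indicator A z * W z \<partial>P) = (\<integral>z. indicator A z * real_cond_exp P (sigAX P) W z \<partial>P)"
      by (rule real_cond_exp_intg(2)[symmetric])
         (use integrable_real_mult_indicator[OF \<open>A \<in> sets P\<close> iW] in \<open>auto simp: mult.commute\<close>)
    also have "\<dots> = (\<integral>z. indicator A z * real_cond_exp P (sigAX P) (\<lambda>z. V z * E z * zS z) z \<partial>P)"
      by (rule integral_cong_AE) (use c_i in \<open>auto\<close>)
    also have "\<dots> = (\<integral>z. indicator A z * (V z * E z * zS z) \<partial>P)"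
      by (rule real_cond_exp_intg(2))
         (use integrable_real_mult_indicator[OF \<open>A \<in> sets P\<close> iVES] in \<open>auto simp: mult.commute\<close>)
    finally show ?thesis .
  qed
  have enn1: "(\<integral>z. indicator A z * (V z * E z * zS z) \<partial>P)
      = enn2real (\<integral>\<^sup>+ z. indicator A z * ennreal (V z) * ennreal (E z) * ennreal (zS z) \<partial>P)"
    if A: "A \<in> sets P" for A
  proof -
    have [measurable]: "A \<in> sets P" by fact
    have "(\<integral>z. indicator A z * (V z * E z * zS z) \<partial>P) = enn2real (\<integral>\<^sup>+ z. ennreal (indicator A z * (V z * E z * zS z)) \<partial>P)"
      by (rule integral_eq_nn_integral) (measurable, use ae in \<open>eventually_elim, auto\<close>)
    also have "(\<integral>\<^sup>+ z. ennreal (indicator A z * (V z * E z * zS z)) \<partial>P)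
       = (\<integral>\<^sup>+ z. indicator A z * ennreal (V z) * ennreal (E z) * ennreal (zS z) \<partial>P)"
      by (rule nn_integral_cong_AE) (use ae in \<open>eventually_elim, auto simp: ennreal_mult'' indicator_def\<close>)
    finally show ?thesis .
  qed
  have enn2: "(\<integral>z. indicator A z * V z \<partial>P) = enn2real (\<integral>\<^sup>+ z. indicator A z * ennreal (V z) \<partial>P)"
    if A: "A \<in> sets P" for A
  proof -
    have [measurable]: "A \<in> sets P" by fact
    have "(\<integral>z. indicator A z * V z \<partial>P) = enn2real (\<integral>\<^sup>+ z. ennreal (indicator A z * V z) \<partial>P)"
      by (rule integral_eq_nn_integral) (measurable, use ae in \<open>eventually_elim, auto\<close>)
    also have "(\<integral>\<^sup>+ z. ennreal (indicator A z * V z) \<partial>P) = (\<integral>\<^sup>+ z. indicator A z * ennreal (V z) \<partial>P)"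
      by (rule nn_integral_cong) (auto simp: indicator_def)
    finally show ?thesis .
  qed
  show ?thesis
  proof (cases "c = top")
    case True
    have sp: "space P \<in> sets (sigAX P)" using sets.top[of "sigAX P"] by (simp add: sigAX_def)
    have "(\<integral>\<^sup>+ z. indicator (space P) z * ennreal (V z) * ennreal (E z) * ennreal (zS z) \<partial>P)
       = (\<integral>\<^sup>+ z. ennreal (V z * E z * zS z) \<partial>P)"
      by (rule nn_integral_cong_AE) (use ae in \<open>eventually_elim, auto simp: ennreal_mult'' spU\<close>)
    also have "\<dots> < top" using integrableD(2)[OF iVES] by (simp add: top.not_eq_extremum)
    finally have "(\<integral>\<^sup>+ z. indicator (space P) z * ennreal (V z) \<partial>P) * c < top" using N[OF sp] by simp
    then have V0: "(\<integral>\<^sup>+ z. indicator (space P) z * ennreal (V z) \<partial>P) = 0"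
      using True by (simp add: ennreal_mult_less_top)
    show ?thesis
    proof (rule that[of 0])
      fix A assume A: "A \<in> sets (sigAX P)"
      have "(\<integral>\<^sup>+ z. indicator A z * ennreal (V z) \<partial>P) \<le> (\<integral>\<^sup>+ z. indicator (space P) z * ennreal (V z) \<partial>P)"
        using AP[OF A] sets.sets_into_space[OF AP[OF A]]
        by (intro nn_integral_mono) (auto simp: indicator_def)
      then show "(\<integral>z. indicator A z * zV z $ j \<partial>P) = 0 * (\<integral>z. indicator A z * zW z $ j \<partial>P)"
        using enn2[OF AP[OF A]] V0 by (simp add: V_def)
    qed
  next
    case False
    define r where "r = enn2real c"
    have r0: "r > 0" using False c0 unfolding r_def by (simp add: enn2real_positive_iff top.not_eq_extremum zero_less_iff_neq_zero)
    have cr: "c = ennreal r" using False unfolding r_def by (simp add: top.not_eq_extremum)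
    show ?thesis
    proof (rule that[of "1 / r"])
      fix A assume A: "A \<in> sets (sigAX P)"
      have "(\<integral>z. indicator A z * W z \<partial>P) = enn2real ((\<integral>\<^sup>+ z. indicator A z * ennreal (V z) \<partial>P) * c)"
        using WV[OF A] enn1[OF AP[OF A]] N[OF A] by simp
      also have "\<dots> = (\<integral>z. indicator A z * V z \<partial>P) * r"
        using enn2[OF AP[OF A]] cr r0 by (simp add: enn2real_mult)
      finally show "(\<integral>z. indicator A z * zV z $ j \<partial>P) = 1 / r * (\<integral>z. indicator A z * zW z $ j \<partial>P)"
        using r0 by (simp add: field_simps V_def W_def)
    qed
  qed
qed


definition regW :: "('J::finite,'p::finite) zt measure \<Rightarrow> 'J \<Rightarrow> real \<Rightarrow> ('J,'p) zt \<Rightarrow> real"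
  where "regW P j a z =
    real_cond_exp P (sigX P) (\<lambda>z. zW z $ j * indicator {z. zA z = a} z) z
    / real_cond_exp P (sigX P) (indicator {z. zA z = a}) z"

lemma regV_regW:
  fixes P :: "('J::finite,'p::finite) zt measure" and j :: 'J
  assumes "model P"
  obtains d where "\<And>a. AE z in P. regV P j a z = d * regW P j a z"
proof -
  obtain d where d: "\<And>A. A \<in> sets (sigAX P) \<Longrightarrow>
     (\<integral>z. indicator A z * zV z $ j \<partial>P) = d * (\<integral>z. indicator A z * zW z $ j \<partial>P)"
    using key[OF assms] by blast
  have pP: "prob_space P" and sP: "sets P = sets borel"
    and iW: "integrable P (\<lambda>z. zW z $ j)" and iV: "integrable P (\<lambda>z. zV z $ j)"
    using assms unfolding model_def by auto
  interpret prob_space P by fact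
  interpret sigma_finite_subalgebra P "sigX P" using subalg_X pP sP by blast
  have spU: "space P = UNIV" using sets_eq_imp_space_eq[OF sP] by simp
  have [measurable]: "(\<lambda>z. zV z $ j) \<in> borel_measurable P" "(\<lambda>z. zW z $ j) \<in> borel_measurable P" "zA \<in> borel_measurable P"
    using meas_P[OF sP] by auto
  show ?thesis
  proof (rule that)
    fix a :: real
    have Aa[measurable]: "{z. zA z = a} \<in> sets P"
    proof -
      have "{z. zA z = a} = zA -` {a} \<inter> space P" using spU by auto
      also have "\<dots> \<in> sets P" by measurable
      finally show ?thesis .
    qed
    have iWa: "integrable P (\<lambda>z. zW z $ j * indicator {z. zA z = a} z)"
      by (rule integrable_real_mult_indicator[OF Aa iW])
    have iVa: "integrable P (\<lambda>z. zV z $ j * indicator {z. zA z = a} z)"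
      by (rule integrable_real_mult_indicator[OF Aa iV])
    have c: "AE z in P. real_cond_exp P (sigX P) (\<lambda>z. zV z $ j * indicator {z. zA z = a} z) z
        = d * real_cond_exp P (sigX P) (\<lambda>z. zW z $ j * indicator {z. zA z = a} z) z"
    proof (rule real_cond_exp_charact)
      fix B assume B: "B \<in> sets (sigX P)"
      then obtain C where C: "C \<in> sets borel" "B = zX -` C \<inter> space P" using sets_sigX by blast
      have BP[measurable]: "B \<in> sets P" using B subalg unfolding subalgebra_def by auto
      have [measurable]: "B \<in> sets (sigX P)" by fact
      have BA: "B \<inter> {z. zA z = a} \<in> sets (sigAX P)"
      proof -
        have "B \<inter> {z. zA z = a} = (\<lambda>z. (zA z, zX z)) -` ({a} \<times> C) \<inter> space P" using C spU by auto
        moreover have "{a} \<times> C \<in> sets borel" using C by (intro borel_Times) auto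
        ultimately show ?thesis using sets_sigAX by blast
      qed
      have "(\<integral>z\<in>B. zV z $ j * indicator {z. zA z = a} z \<partial>P) = (\<integral>z. indicator (B \<inter> {z. zA z = a}) z * zV z $ j \<partial>P)"
        unfolding set_lebesgue_integral_def by (rule Bochner_Integration.integral_cong) (auto simp: indicator_def)
      also have "\<dots> = d * (\<integral>z. indicator (B \<inter> {z. zA z = a}) z * zW z $ j \<partial>P)" using d[OF BA] .
      also have "(\<integral>z. indicator (B \<inter> {z. zA z = a}) z * zW z $ j \<partial>P) = (\<integral>z. indicator B z * (zW z $ j * indicator {z. zA z = a} z) \<partial>P)"
        by (rule Bochner_Integration.integral_cong) (auto simp: indicator_def)
      also have "\<dots> = (\<integral>z. indicator B z * real_cond_exp P (sigX P) (\<lambda>z. zW z $ j * indicator {z. zA z = a} z) z \<partial>P)"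
        by (rule real_cond_exp_intg(2)[symmetric])
           (use integrable_real_mult_indicator[OF BP iWa] in \<open>auto simp: mult.commute\<close>)
      also have "d * \<dots> = (\<integral>z\<in>B. d * real_cond_exp P (sigX P) (\<lambda>z. zW z $ j * indicator {z. zA z = a} z) z \<partial>P)"
        unfolding set_lebesgue_integral_def by (simp add: mult_ac)
      finally show "(\<integral>z\<in>B. zV z $ j * indicator {z. zA z = a} z \<partial>P) = (\<integral>z\<in>B. d * real_cond_exp P (sigX P) (\<lambda>z. zW z $ j * indicator {z. zA z = a} z) z \<partial>P)" .
    qed (use iVa real_cond_exp_int(1)[OF iWa] in auto)
    then show "AE z in P. regV P j a z = d * regW P j a z"
      unfolding regV_def regW_def by eventually_elim simp
  qed
qed


type_synonym ('J,'p) ot = "(real^'J) \<times> real \<times> (real^'p)"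

definition oW :: "('J::finite,'p::finite) ot \<Rightarrow> real^'J" where "oW y = fst y"
definition oA :: "('J::finite,'p::finite) ot \<Rightarrow> real" where "oA y = fst (snd y)"
definition oX :: "('J::finite,'p::finite) ot \<Rightarrow> real^'p" where "oX y = snd (snd y)"
definition GQ :: "('J::finite,'p::finite) ot measure" where "GQ = vimage_algebra UNIV oX borel"

lemma meas_o:
  shows "(\<lambda>y. oW y $ j) \<in> borel_measurable (borel :: ('J::finite,'p::finite) ot measure)"
    "oA \<in> borel_measurable (borel :: ('J::finite,'p::finite) ot measure)"
    "oX \<in> borel_measurable (borel :: ('J::finite,'p::finite) ot measure)"
  unfolding oW_def oA_def oX_def
  by (intro borel_measurable_continuous_onI continuous_intros)+

lemma subalg_Q:
  assumes "prob_space Q" "sets Q = sets (borel :: ('J::finite,'p::finite) ot measure)"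
  shows "sigma_finite_subalgebra Q GQ"
proof -
  interpret prob_space Q by fact
  have spU: "space Q = UNIV" using sets_eq_imp_space_eq[OF assms(2)] by simp
  have "oX \<in> borel_measurable Q" by (subst measurable_cong_sets[OF assms(2) refl]) (rule meas_o(3))
  then have "subalgebra Q GQ" unfolding subalgebra_def GQ_def
    using measurable_iff_sets[THEN iffD1, of oX Q borel] spU by auto
  then show ?thesis
    by (intro finite_measure_subalgebra_is_sigma_finite) (unfold_locales)
qed

lemma transfer:
  fixes P :: "('J::finite,'p::finite) zt measure" and f :: "('J,'p) ot \<Rightarrow> real"
  assumes pP: "prob_space P" and sP: "sets P = sets borel"
    and fm[measurable]: "f \<in> borel_measurable borel" and fi: "integrable (distr P borel zObs) f"
  shows "AE z in P. real_cond_exp P (sigX P) (\<lambda>z. f (zObs z)) z = real_cond_exp (distr P borel zObs) GQ f (zObs z)"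
proof -
  define Q where "Q = distr P borel zObs"
  have zm[measurable]: "zObs \<in> measurable P borel" using meas_P(8)[OF sP] .
  have pQ: "prob_space Q" unfolding Q_def by (rule prob_space.prob_space_distr[OF pP zm])
  have sQ: "sets Q = sets borel" unfolding Q_def by simp
  interpret PX: sigma_finite_subalgebra P "sigX P" using subalg_X pP sP by blast
  interpret QG: sigma_finite_subalgebra Q GQ using subalg_Q pQ sQ by blast
  have spU: "space P = UNIV" using sets_eq_imp_space_eq[OF sP] by simp
  have cm[measurable]: "real_cond_exp Q GQ f \<in> borel_measurable borel"
    by (subst measurable_cong_sets[OF sQ[symmetric] refl]) (rule borel_measurable_cond_exp2)
  have cmG: "real_cond_exp Q GQ f \<in> borel_measurable GQ" by simp
  have zG: "zObs \<in> measurable (sigX P) GQ" unfolding GQ_def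
  proof (rule measurable_vimage_algebra2)
    have "zX \<in> measurable (sigX P) borel" unfolding sigX_def by (rule measurable_vimage_algebra1) simp
    moreover have "(\<lambda>x. oX (zObs x)) = (zX :: ('J,'p) zt \<Rightarrow> _)" by (auto simp: oX_def zObs_def)
    ultimately show "(\<lambda>x. oX (zObs x)) \<in> measurable (sigX P) borel" by simp
  qed simp
  have fiQ: "integrable Q f" using fi unfolding Q_def .
  have ciQ: "integrable Q (real_cond_exp Q GQ f)" by (rule QG.real_cond_exp_int(1)[OF fiQ])
  have "AE z in P. real_cond_exp P (sigX P) (\<lambda>z. f (zObs z)) z = real_cond_exp Q GQ f (zObs z)"
  proof (rule PX.real_cond_exp_charact)
    fix B assume B: "B \<in> sets (sigX P)"
    then obtain C where C[measurable]: "C \<in> sets borel" and BC: "B = zX -` C \<inter> space P" using sets_sigX by blast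
    have CG: "oX -` C \<in> sets GQ" unfolding GQ_def using in_vimage_algebra[OF C, of oX UNIV] by simp
    have oXm[measurable]: "oX \<in> borel_measurable borel" by (rule meas_o(3))
    have ind: "indicator B z = (indicator (oX -` C) (zObs z) :: real)" for z
      using BC spU by (auto simp: indicator_def oX_def zObs_def)
    have "(\<integral>z\<in>B. f (zObs z) \<partial>P) = (\<integral>z. indicator (oX -` C) (zObs z) * f (zObs z) \<partial>P)"
      unfolding set_lebesgue_integral_def ind by simp
    also have "\<dots> = (\<integral>y. indicator (oX -` C) y * f y \<partial>Q)"
      unfolding Q_def by (rule integral_distr[symmetric]) (measurable)
    also have "\<dots> = (\<integral>y. indicator (oX -` C) y * real_cond_exp Q GQ f y \<partial>Q)"
    proof (rule QG.real_cond_exp_intg(2)[symmetric])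
      show "integrable Q (\<lambda>x. indicator (oX -` C) x * f x)"
        using integrable_real_mult_indicator[of "oX -` C" Q f] fiQ CG QG.subalg
        unfolding subalgebra_def by (auto simp: mult.commute)
      show "indicator (oX -` C) \<in> borel_measurable GQ" by (rule borel_measurable_indicator[OF CG])
      show "f \<in> borel_measurable Q" by (subst measurable_cong_sets[OF sQ refl]) (rule fm)
    qed
    also have "\<dots> = (\<integral>z. indicator (oX -` C) (zObs z) * real_cond_exp Q GQ f (zObs z) \<partial>P)"
      unfolding Q_def by (rule integral_distr) (measurable)
    also have "\<dots> = (\<integral>z\<in>B. real_cond_exp Q GQ f (zObs z) \<partial>P)"
      unfolding set_lebesgue_integral_def ind by simp
    finally show "(\<integral>z\<in>B. f (zObs z) \<partial>P) = (\<integral>z\<in>B. real_cond_exp Q GQ f (zObs z) \<partial>P)" .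
  next
    show "integrable P (\<lambda>z. f (zObs z))" using fiQ integrable_distr_eq[OF zm fm] unfolding Q_def by simp
    show "integrable P (\<lambda>z. real_cond_exp Q GQ f (zObs z))" using ciQ integrable_distr_eq[OF zm cm] unfolding Q_def by simp
    show "(\<lambda>z. real_cond_exp Q GQ f (zObs z)) \<in> borel_measurable (sigX P)"
      by (rule measurable_compose[OF zG cmG])
  qed
  then show ?thesis unfolding Q_def .
qed


definition rQ :: "('J::finite,'p::finite) ot measure \<Rightarrow> 'J \<Rightarrow> real \<Rightarrow> ('J,'p) ot \<Rightarrow> real"
  where "rQ Q j a y =
    real_cond_exp Q GQ (\<lambda>y. oW y $ j * indicator {y. oA y = a} y) y
    / real_cond_exp Q GQ (indicator {y. oA y = a}) y"

lemma regW_int: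
  fixes P :: "('J::finite,'p::finite) zt measure" and j :: 'J
  assumes "model P"
  shows "(\<integral>z. regW P j a z \<partial>P) = (\<integral>y. rQ (distr P borel zObs) j a y \<partial>(distr P borel zObs))"
proof -
  have pP: "prob_space P" and sP: "sets P = sets borel"
    and iW: "integrable P (\<lambda>z. zW z $ j)"
    using assms unfolding model_def by auto
  interpret prob_space P by fact
  define Q where "Q = distr P borel zObs"
  have sQ: "sets Q = sets borel" unfolding Q_def by simp
  have spU: "space P = UNIV" using sets_eq_imp_space_eq[OF sP] by simp
  have zm[measurable]: "zObs \<in> measurable P borel" using meas_P(8)[OF sP] .
  have [measurable]: "(\<lambda>z. zW z $ j) \<in> borel_measurable P" "zA \<in> borel_measurable P"
    using meas_P[OF sP] by auto
  have [measurable]: "(\<lambda>y. oW y $ j) \<in> borel_measurable borel" "oA \<in> borel_measurable borel"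
    using meas_o by auto
  have Aa[measurable]: "{z. zA z = a} \<in> sets P"
  proof -
    have "{z. zA z = a} = zA -` {a} \<inter> space P" using spU by auto
    also have "\<dots> \<in> sets P" by measurable
    finally show ?thesis .
  qed
  define f1 :: "('J,'p) ot \<Rightarrow> real" where "f1 = (\<lambda>y. oW y $ j * (indicator {y. oA y = a} y :: real))"
  define f2 :: "('J,'p) ot \<Rightarrow> real" where "f2 = (\<lambda>y. (indicator {y. oA y = a} y :: real))"
  have f1m[measurable]: "f1 \<in> borel_measurable borel" unfolding f1_def by measurable
  have f2m[measurable]: "f2 \<in> borel_measurable borel" unfolding f2_def by measurable
  have e1: "(\<lambda>z. f1 (zObs z)) = (\<lambda>z. zW z $ j * indicator {z. zA z = a} z)"
    by (auto simp: f1_def oW_def oA_def zObs_def zW_def zA_def indicator_def)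
  have e2: "(\<lambda>z. f2 (zObs z)) = indicator {z. zA z = a}"
    by (auto simp: f2_def oW_def oA_def zObs_def zW_def zA_def indicator_def)
  have i1: "integrable Q f1" unfolding Q_def
    by (subst integrable_distr_eq[OF zm f1m]) (simp add: e1 integrable_real_mult_indicator[OF Aa iW])
  have i2: "integrable Q f2" unfolding Q_def
    by (subst integrable_distr_eq[OF zm f2m]) (simp add: e2 integrable_real_indicator[OF Aa] less_top[symmetric])
  have pQ: "prob_space Q" unfolding Q_def by (rule prob_space.prob_space_distr[OF pP zm])
  have t1: "AE z in P. real_cond_exp P (sigX P) (\<lambda>z. f1 (zObs z)) z = real_cond_exp Q GQ f1 (zObs z)"
    unfolding Q_def by (rule transfer[OF pP sP f1m]) (use i1 in \<open>simp add: Q_def\<close>)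
  have t2: "AE z in P. real_cond_exp P (sigX P) (\<lambda>z. f2 (zObs z)) z = real_cond_exp Q GQ f2 (zObs z)"
    unfolding Q_def by (rule transfer[OF pP sP f2m]) (use i2 in \<open>simp add: Q_def\<close>)
  have rQeq: "rQ Q j a = (\<lambda>y. real_cond_exp Q GQ f1 y / real_cond_exp Q GQ f2 y)"
    unfolding rQ_def f1_def f2_def by (rule ext) simp
  have rm[measurable]: "rQ Q j a \<in> borel_measurable borel"
    by (subst measurable_cong_sets[OF sQ[symmetric] refl]) (simp add: rQeq)
  have "(\<integral>z. regW P j a z \<partial>P) = (\<integral>z. rQ Q j a (zObs z) \<partial>P)"
  proof (rule integral_cong_AE)
    show "regW P j a \<in> borel_measurable P" unfolding regW_def by measurable
    show "(\<lambda>z. rQ Q j a (zObs z)) \<in> borel_measurable P" by measurable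
    show "AE z in P. regW P j a z = rQ Q j a (zObs z)"
      using t1 t2 unfolding e1 e2 by eventually_elim (simp add: regW_def rQeq)
  qed
  also have "\<dots> = (\<integral>y. rQ Q j a y \<partial>Q)"
    unfolding Q_def by (rule integral_distr[symmetric, OF zm]) (simp add: Q_def[symmetric] rm)
  finally show ?thesis unfolding Q_def .
qed


lemma regV_int:
  fixes P :: "('J::finite,'p::finite) zt measure" and j :: 'J
  assumes "model P" and d: "AE z in P. regV P j a z = d * regW P j a z"
  shows "(\<integral>z. regV P j a z \<partial>P) = d * (\<integral>y. rQ (distr P borel zObs) j a y \<partial>(distr P borel zObs))"
proof -
  have sP: "sets P = sets borel" using assms unfolding model_def by auto
  have "(\<integral>z. regV P j a z \<partial>P) = (\<integral>z. d * regW P j a z \<partial>P)"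
  proof (rule integral_cong_AE)
    show "regV P j a \<in> borel_measurable P" unfolding regV_def by measurable
    show "(\<lambda>z. d * regW P j a z) \<in> borel_measurable P" unfolding regW_def by measurable
  qed (rule d)
  also have "\<dots> = d * (\<integral>z. regW P j a z \<partial>P)" by simp
  finally show ?thesis using regW_int[OF assms(1)] by simp
qed

theorem mainTheorem3:
  fixes P1 P2 :: "((real^'J) \<times> real \<times> (real^'p) \<times> (real^'J) \<times> (real^'J) \<times> real) measure"
    and j :: 'J
  assumes "model P1" and "model P2"
    and "Psi2_well_defined P1 j" and "Psi2_well_defined P2 j"
    and "distr P1 borel zObs = distr P2 borel zObs"
  shows "Psi2 P1 j = Psi2 P2 j"
proof -
  define Q where "Q = distr P1 borel zObs"
  define I where "I a = (\<integral>y. rQ Q j a y \<partial>Q)" for a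
  obtain d1 where d1: "\<And>a. AE z in P1. regV P1 j a z = d1 * regW P1 j a z"
    using regV_regW[OF assms(1)] by blast
  obtain d2 where d2: "\<And>a. AE z in P2. regV P2 j a z = d2 * regW P2 j a z"
    using regV_regW[OF assms(2)] by blast
  have r1: "(\<integral>z. regV P1 j a z \<partial>P1) = d1 * I a" for a
    using regV_int[OF assms(1) d1] unfolding I_def Q_def by simp
  have r2: "(\<integral>z. regV P2 j a z \<partial>P2) = d2 * I a" for a
    using regV_int[OF assms(2) d2] assms(5) unfolding I_def Q_def by simp
  have p1: "0 < d1 * I 0" using assms(3) r1[of 0] unfolding Psi2_well_defined_def by auto
  have p2: "0 < d2 * I 0" using assms(4) r2[of 0] unfolding Psi2_well_defined_def by auto
  have "d1 \<noteq> 0" "d2 \<noteq> 0" using p1 p2 by auto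
  then show ?thesis unfolding Psi2_def r1 r2 by simp
qed

end
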